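(* Let $Y$ be a set and $y\in Y$. The centralizer of $y$ in $R\mathfrak L[Y]$ is exactly the Lie ideal $\langle y\rangle$ of $R\mathfrak L[Y]$ generated by $y$.
   Context: $R\mathfrak L[Y]$ is the Lie ring generated by $Y$ subject to $[y_1,[y_2,[\cdots[y_{s-1},y_s]\cdots]]]=0$ for every $s\geq2$ and every $(y_1,\dots,y_s)\in Y^s$ with $y_i=y_j$ for some $i\neq j$. The centralizer of $y$ is $\{u\in R\mathfrak L[Y]:[u,y]=0\}$. *)

theory Defs
  imports "HOL-Library.Poly_Mapping"
begin

text \<open>The generating set Y is represented by the type 'a (Y = UNIV).
  The free non-associative ring over Y has as Z-basis the binary bracket
  trees (magma words) with leaves in Y.\<close>

datatype 'a btree = Leaf 'a | Br "'a btree" "'a btree"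

type_synonym 'a magring = "'a btree \<Rightarrow>\<^sub>0 int"

definition gen :: "'a \<Rightarrow> 'a magring" where
  "gen y = Poly_Mapping.single (Leaf y) 1"

definition br :: "'a magring \<Rightarrow> 'a magring \<Rightarrow> 'a magring" where
  "br p q = (\<Sum>s\<in>Poly_Mapping.keys p. \<Sum>t\<in>Poly_Mapping.keys q.
       Poly_Mapping.single (Br s t) (Poly_Mapping.lookup p s * Poly_Mapping.lookup q t))"

inductive_set ideal_gen :: "'a magring set \<Rightarrow> 'a magring set" for S where
  base: "x \<in> S \<Longrightarrow> x \<in> ideal_gen S"
| zero: "0 \<in> ideal_gen S"
| add: "x \<in> ideal_gen S \<Longrightarrow> z \<in> ideal_gen S \<Longrightarrow> x + z \<in> ideal_gen S"
| neg: "x \<in> ideal_gen S \<Longrightarrow> - x \<in> ideal_gen S"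
| left: "x \<in> ideal_gen S \<Longrightarrow> br z x \<in> ideal_gen S"
| right: "x \<in> ideal_gen S \<Longrightarrow> br x z \<in> ideal_gen S"

fun rnorm :: "'a list \<Rightarrow> 'a magring" where
  "rnorm [] = 0"
| "rnorm [y] = gen y"
| "rnorm (y # ys) = br (gen y) (rnorm ys)"

text \<open>Defining relations of R L[Y]: Lie ring axioms (alternating, Jacobi)
  plus the vanishing of right-normed brackets with a repeated generator.\<close>
definition RL_rels :: "'a magring set" where
  "RL_rels = {br u u | u. True}
     \<union> {br u (br v w) + br v (br w u) + br w (br u v) | u v w. True}
     \<union> {rnorm ys | ys. 2 \<le> length ys \<and> \<not> distinct ys}"

text \<open>Kernel of the projection from the free non-associative ring onto R L[Y];
  R L[Y] is the quotient by this ideal.\<close>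
definition RL_kernel :: "'a magring set" where
  "RL_kernel = ideal_gen RL_rels"

text \<open>Representatives (preimages) of the centralizer of y in R L[Y].\<close>
definition RL_centralizer :: "'a \<Rightarrow> 'a magring set" where
  "RL_centralizer y = {u. br u (gen y) \<in> RL_kernel}"

text \<open>Representatives (preimage) of the Lie ideal of R L[Y] generated by y.\<close>
definition RL_lie_ideal_gen :: "'a \<Rightarrow> 'a magring set" where
  "RL_lie_ideal_gen y = ideal_gen (insert (gen y) RL_kernel)"

end

theory Submission
  imports Defs "HOL-Library.Multiset"
begin


abbreviation T :: "'a btree \<Rightarrow> 'a magring" where "T t \<equiv> Poly_Mapping.single t 1"

lemma lookup_br:
  "Poly_Mapping.lookup (br p q) w = (case w of Leaf _ \<Rightarrow> 0
     | Br s t \<Rightarrow> Poly_Mapping.lookup p s * Poly_Mapping.lookup q t)"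
proof -
  have "Poly_Mapping.lookup (br p q) w = (\<Sum>s\<in>Poly_Mapping.keys p. \<Sum>t\<in>Poly_Mapping.keys q.
      (Poly_Mapping.lookup p s * Poly_Mapping.lookup q t when Br s t = w))"
    unfolding br_def by (simp add: lookup_sum lookup_single)
  also have "\<dots> = (case w of Leaf _ \<Rightarrow> 0
     | Br s t \<Rightarrow> Poly_Mapping.lookup p s * Poly_Mapping.lookup q t)"
  proof (cases w)
    case (Leaf x)
    then show ?thesis by simp
  next
    case (Br s0 t0)
    have "(\<Sum>s\<in>Poly_Mapping.keys p. \<Sum>t\<in>Poly_Mapping.keys q.
      (Poly_Mapping.lookup p s * Poly_Mapping.lookup q t when Br s t = w))
      = (\<Sum>s\<in>Poly_Mapping.keys p. (Poly_Mapping.lookup p s * Poly_Mapping.lookup q t0 when s = s0))"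
    proof (rule sum.cong[OF refl])
      fix s assume "s \<in> Poly_Mapping.keys p"
      show "(\<Sum>t\<in>Poly_Mapping.keys q. (Poly_Mapping.lookup p s * Poly_Mapping.lookup q t when Br s t = w))
        = (Poly_Mapping.lookup p s * Poly_Mapping.lookup q t0 when s = s0)"
        using Br by (cases "t0 \<in> Poly_Mapping.keys q") (auto simp: when_def in_keys_iff intro!: sum.neutral)
    qed
    also have "\<dots> = Poly_Mapping.lookup p s0 * Poly_Mapping.lookup q t0"
      by (cases "s0 \<in> Poly_Mapping.keys p") (auto simp: when_def in_keys_iff)
    finally show ?thesis using Br by simp
  qed
  finally show ?thesis .
qed

lemma br_add1: "br (a + b) c = br a c + br b c"
  by (rule poly_mapping_eqI) (simp add: lookup_br lookup_add distrib_right split: btree.split)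
lemma br_add2: "br c (a + b) = br c a + br c b"
  by (rule poly_mapping_eqI) (simp add: lookup_br lookup_add distrib_left split: btree.split)
lemma br_neg1: "br (- a) c = - br a c"
  by (rule poly_mapping_eqI) (simp add: lookup_br split: btree.split)
lemma br_neg2: "br c (- a) = - br c a"
  by (rule poly_mapping_eqI) (simp add: lookup_br split: btree.split)
lemma br_zero1[simp]: "br 0 c = 0"
  by (rule poly_mapping_eqI) (simp add: lookup_br split: btree.split)
lemma br_zero2[simp]: "br c 0 = 0"
  by (rule poly_mapping_eqI) (simp add: lookup_br split: btree.split)
lemma br_diff1: "br (a - b) c = br a c - br b c"
  using br_add1[of a "-b" c] br_neg1[of b c] by simp
lemma br_diff2: "br c (a - b) = br c a - br c b"
  using br_add2[of c a "-b"] br_neg2[of c b] by simp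
lemma br_T: "br (T s) (T t) = T (Br s t)"
  by (rule poly_mapping_eqI) (auto simp: lookup_br lookup_single when_def split: btree.split)

lemma ideal_diff: "a \<in> ideal_gen S \<Longrightarrow> b \<in> ideal_gen S \<Longrightarrow> a - b \<in> ideal_gen S"
  using ideal_gen.add[OF _ ideal_gen.neg, of a S b] by simp

abbreviation K where "K \<equiv> RL_kernel"

lemma K_add: "a \<in> K \<Longrightarrow> b \<in> K \<Longrightarrow> a + b \<in> K"
  unfolding RL_kernel_def by (rule ideal_gen.add)
lemma K_neg: "a \<in> K \<Longrightarrow> - a \<in> K"
  unfolding RL_kernel_def by (rule ideal_gen.neg)
lemma K_diff: "a \<in> K \<Longrightarrow> b \<in> K \<Longrightarrow> a - b \<in> K"
  unfolding RL_kernel_def by (rule ideal_diff)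
lemma K_zero: "0 \<in> K"
  unfolding RL_kernel_def by (rule ideal_gen.zero)
lemma K_left: "a \<in> K \<Longrightarrow> br z a \<in> K"
  unfolding RL_kernel_def by (rule ideal_gen.left)
lemma K_right: "a \<in> K \<Longrightarrow> br a z \<in> K"
  unfolding RL_kernel_def by (rule ideal_gen.right)
lemma K_rel: "a \<in> RL_rels \<Longrightarrow> a \<in> K"
  unfolding RL_kernel_def by (rule ideal_gen.base)

lemma K_alt: "br u u \<in> K"
  by (rule K_rel) (auto simp: RL_rels_def)
lemma K_jac: "br u (br v w) + br v (br w u) + br w (br u v) \<in> K"
  by (rule K_rel) (unfold RL_rels_def, blast)

lemma K_anti: "br a b + br b a \<in> K"
proof -
  have "br a b + br b a = br (a+b) (a+b) - br a a - br b b"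
    by (simp add: br_add1 br_add2 algebra_simps)
  thus ?thesis by (metis K_diff K_alt)
qed

lemma K_jac2: "br (br a b) c - (br a (br b c) - br b (br a c)) \<in> K"
proof -
  have 1: "br c (br a b) + br (br a b) c \<in> K" by (rule K_anti)
  have 2: "br b (br c a + br a c) \<in> K" by (rule K_left, rule K_anti)
  have "br (br a b) c - (br a (br b c) - br b (br a c)) =
     - (br a (br b c) + br b (br c a) + br c (br a b)) + (br c (br a b) + br (br a b) c)
     + br b (br c a + br a c)"
    by (simp add: br_add2 algebra_simps)
  thus ?thesis by (metis 1 2 K_add K_neg K_jac)
qed



fun rt :: "'a list \<Rightarrow> 'a btree" where
  "rt [] = Leaf undefined"
| "rt [x] = Leaf x"
| "rt (x # xs) = Br (Leaf x) (rt xs)"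

fun leaves :: "'a btree \<Rightarrow> 'a list" where
  "leaves (Leaf x) = [x]"
| "leaves (Br s t) = leaves s @ leaves t"

lemma rnorm_rt: "L \<noteq> [] \<Longrightarrow> rnorm L = T (rt L)"
  by (induction L rule: rnorm.induct) (auto simp: gen_def br_T)

lemma leaves_rt: "L \<noteq> [] \<Longrightarrow> leaves (rt L) = L"
  by (induction L rule: rt.induct) auto

lemma leaves_ne: "leaves t \<noteq> []"
  by (induction t) auto

lemma rnorm_Cons: "L \<noteq> [] \<Longrightarrow> rnorm (x # L) = br (gen x) (rnorm L)"
  by (cases L) auto

inductive_set G :: "('a list \<Rightarrow> bool) \<Rightarrow> 'a magring set" for P where
  gK: "k \<in> K \<Longrightarrow> k \<in> G P"
| gR: "P L \<Longrightarrow> rnorm L \<in> G P"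
| gA: "p \<in> G P \<Longrightarrow> q \<in> G P \<Longrightarrow> p + q \<in> G P"
| gN: "p \<in> G P \<Longrightarrow> - p \<in> G P"

lemma G_diff: "p \<in> G P \<Longrightarrow> q \<in> G P \<Longrightarrow> p - q \<in> G P"
  using gA[OF _ gN, of p P q] by simp

lemma G_modK: "p \<in> G P \<Longrightarrow> p - q \<in> K \<Longrightarrow> q \<in> G P"
proof -
  assume a: "p \<in> G P" "p - q \<in> K"
  have "q = p + - (p - q)" by simp
  thus ?thesis using a by (metis gA gK gN)
qed

lemma G_mono: "p \<in> G P \<Longrightarrow> (\<And>L. P L \<Longrightarrow> Q L) \<Longrightarrow> p \<in> G Q"
  by (induction rule: G.induct) (auto intro: G.intros)

definition Pz :: "'a \<Rightarrow> 'a multiset \<Rightarrow> 'a list \<Rightarrow> bool" where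
  "Pz z M L \<longleftrightarrow> L \<noteq> [] \<and> last L = z \<and> mset L = M"

lemma lemmaB: "p \<in> G (Pz z M) \<Longrightarrow> br (T a) p \<in> G (Pz z (mset (leaves a) + M))"
proof (induction a arbitrary: M p)
  case (Leaf x)
  from Leaf show ?case
  proof (induction rule: G.induct)
    case (gK k) then show ?case by (intro G.gK K_left)
  next
    case (gR L)
    hence "L \<noteq> []" by (simp add: Pz_def)
    hence "br (T (Leaf x)) (rnorm L) = rnorm (x # L)" by (simp add: rnorm_Cons gen_def)
    moreover have "Pz z (mset (leaves (Leaf x)) + M) (x # L)" using gR by (auto simp: Pz_def)
    ultimately show ?case by (metis G.gR)
  next
    case (gA p q) then show ?case by (simp add: br_add2 G.gA)
  next
    case (gN p) then show ?case by (simp add: br_neg2 G.gN)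
  qed
next
  case (Br a1 a2)
  have 1: "br (T a1) (br (T a2) p) \<in> G (Pz z (mset (leaves (Br a1 a2)) + M))"
    using Br.IH(1)[OF Br.IH(2)[OF Br.prems]] by (simp add: add.assoc)
  have 2: "br (T a2) (br (T a1) p) \<in> G (Pz z (mset (leaves (Br a1 a2)) + M))"
    using Br.IH(2)[OF Br.IH(1)[OF Br.prems]] by (simp add: add_ac)
  have "br (T (Br a1 a2)) p - (br (T a1) (br (T a2) p) - br (T a2) (br (T a1) p)) \<in> K"
    using K_jac2[of "T a1" "T a2" p] by (simp add: br_T)
  hence "(br (T a1) (br (T a2) p) - br (T a2) (br (T a1) p)) - br (T (Br a1 a2)) p \<in> K"
    by (metis K_neg minus_diff_eq)
  thus ?case using G_diff[OF 1 2] G_modK by blast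
qed

lemma spanning: "z \<in> set (leaves t) \<Longrightarrow> T t \<in> G (Pz z (mset (leaves t)))"
proof (induction t)
  case (Leaf x)
  hence "T (Leaf x) = rnorm [z]" by (simp add: gen_def)
  moreover have "Pz z (mset (leaves (Leaf x))) [z]" using Leaf by (simp add: Pz_def)
  ultimately show ?case by (metis G.gR)
next
  case (Br a b)
  show ?case
  proof (cases "z \<in> set (leaves b)")
    case True
    from lemmaB[OF Br.IH(2)[OF True], of a] show ?thesis by (simp add: br_T)
  next
    case False
    hence "z \<in> set (leaves a)" using Br.prems by simp
    from lemmaB[OF Br.IH(1)[OF this], of b]
    have "br (T b) (T a) \<in> G (Pz z (mset (leaves (Br a b))))" by (simp add: add_ac)
    moreover have "br (T b) (T a) - - T (Br a b) \<in> K"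
      using K_anti[of "T b" "T a"] by (simp add: br_T add_ac)
    ultimately show ?thesis by (metis G_modK gN minus_minus)
  qed
qed



abbreviation Gy :: "'a \<Rightarrow> 'a magring set" where
  "Gy y \<equiv> G (\<lambda>L. L \<noteq> [] \<and> last L = y)"

lemma Gy_T: "p \<in> Gy y \<Longrightarrow> br (T a) p \<in> Gy y"
proof (induction rule: G.induct)
  case (gK k) then show ?case by (intro G.gK K_left)
next
  case (gR L)
  have "rnorm L \<in> G (Pz y (mset L))" using gR by (intro G.gR) (simp add: Pz_def)
  from lemmaB[OF this, of a] show ?case by (rule G_mono) (simp add: Pz_def)
next
  case (gA p q) then show ?case by (simp add: br_add2 G.gA)
next
  case (gN p) then show ?case by (simp add: br_neg2 G.gN)
qed

lemma Gy_left: assumes "p \<in> Gy y" shows "br z p \<in> Gy y"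
  using subset_UNIV[of "Poly_Mapping.keys z"]
proof (induction z rule: frag_induction)
  case zero then show ?case by (simp add: G.gK K_zero)
next
  case (one x) then show ?case using assms by (simp add: Gy_T)
next
  case (diff a b) then show ?case by (simp add: br_diff1 G_diff)
qed

lemma Gy_right: "p \<in> Gy y \<Longrightarrow> br p z \<in> Gy y"
proof -
  assume "p \<in> Gy y"
  hence "- br z p \<in> Gy y" by (intro G.gN Gy_left)
  moreover have "- br z p - br p z = - (br z p + br p z)" by simp
  hence "- br z p - br p z \<in> K" using K_anti[of z p] K_neg by metis
  ultimately show ?thesis by (rule G_modK)
qed

lemma ideal_Gy: "x \<in> RL_lie_ideal_gen y \<Longrightarrow> x \<in> Gy y"
  unfolding RL_lie_ideal_gen_def
proof (induction rule: ideal_gen.induct)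
  case (base x)
  show ?case
  proof (cases "x = gen y")
    case True
    have "rnorm [y] \<in> Gy y" by (rule G.gR) simp
    thus ?thesis using True by simp
  next
    case False
    then show ?thesis using base by (auto intro: G.gK)
  qed
next
  case zero then show ?case by (simp add: G.gK K_zero)
next
  case (add x z) then show ?case by (blast intro: G.gA)
next
  case (neg x) then show ?case by (blast intro: G.gN)
next
  case (left x z) then show ?case by (blast intro: Gy_left)
next
  case (right x z) then show ?case by (blast intro: Gy_right)
qed

lemma Gy_cent: "p \<in> Gy y \<Longrightarrow> br p (gen y) \<in> K"
proof (induction rule: G.induct)
  case (gK k) then show ?case by (rule K_right)
next
  case (gR L)
  have "y \<in> set L" using gR by auto
  hence "2 \<le> length (y # L) \<and> \<not> distinct (y # L)" using gR by (cases L) auto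
  hence "rnorm (y # L) \<in> RL_rels" unfolding RL_rels_def by blast
  hence "rnorm (y # L) \<in> K" by (rule K_rel)
  hence "br (gen y) (rnorm L) \<in> K" using gR by (simp add: rnorm_Cons)
  hence "- br (gen y) (rnorm L) + (br (gen y) (rnorm L) + br (rnorm L) (gen y)) \<in> K"
    by (intro K_add K_neg K_anti)
  then show ?case by simp
next
  case (gA p q) then show ?case by (simp add: br_add1 K_add)
next
  case (gN p) then show ?case by (simp add: br_neg1 K_neg)
qed

lemma supset_dir: "RL_lie_ideal_gen y \<subseteq> RL_centralizer y"
proof
  fix x assume "x \<in> RL_lie_ideal_gen y"
  hence "br x (gen y) \<in> K" by (intro Gy_cent ideal_Gy)
  thus "x \<in> RL_centralizer y" by (simp add: RL_centralizer_def)
qed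



fun conv :: "('a list \<Rightarrow> int) \<Rightarrow> ('a list \<Rightarrow> int) \<Rightarrow> 'a list \<Rightarrow> int" where
  "conv f g [] = f [] * g []"
| "conv f g (x # W) = f [] * g (x # W) + conv (\<lambda>V. f (x # V)) g W"

lemma conv_lin1: "conv (\<lambda>V. a * f V + b * f' V) g W = a * conv f g W + b * conv f' g W"
  by (induction W arbitrary: f f') (auto simp: algebra_simps)

lemma conv_lin2: "conv f (\<lambda>V. a * g V + b * g' V) W = a * conv f g W + b * conv f g' W"
  by (induction W arbitrary: f) (auto simp: algebra_simps)

lemma conv_add1: "conv (\<lambda>V. f V + f' V) g W = conv f g W + conv f' g W"
  using conv_lin1[of 1 f 1 f'] by simp
lemma conv_diff1: "conv (\<lambda>V. f V - f' V) g W = conv f g W - conv f' g W"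
  using conv_lin1[of 1 f "-1" f'] by simp
lemma conv_smul1: "conv (\<lambda>V. c * f V) g W = c * conv f g W"
  using conv_lin1[of c f 0 f] by simp
lemma conv_diff2: "conv f (\<lambda>V. g V - g' V) W = conv f g W - conv f g' W"
  using conv_lin2[of f 1 g "-1" g'] by simp
lemma conv_zero1[simp]: "conv (\<lambda>V. 0) g W = 0"
  using conv_lin1[of 0 "\<lambda>_. 0" 0 "\<lambda>_. 0" g W] by simp
lemma conv_zero2[simp]: "conv f (\<lambda>V. 0) W = 0"
  using conv_lin2[of f 0 "\<lambda>_. 0" 0 "\<lambda>_. 0" W] by simp

lemma conv_assoc: "conv (conv f g) h W = conv f (conv g h) W"
proof (induction W arbitrary: f g)
  case Nil then show ?case by simp
next
  case (Cons x W)
  have e: "(\<lambda>V. conv f g (x # V)) = (\<lambda>V. f [] * g (x # V) + conv (\<lambda>V. f (x # V)) g V)"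
    by simp
  have "conv (conv f g) h (x # W) = f [] * g [] * h (x # W)
      + conv (\<lambda>V. f [] * g (x # V) + conv (\<lambda>V. f (x # V)) g V) h W"
    by (simp only: conv.simps e)
  also have "\<dots> = f [] * g [] * h (x # W) + f [] * conv (\<lambda>V. g (x # V)) h W
      + conv (conv (\<lambda>V. f (x # V)) g) h W"
    using conv_lin1[of "f []" "\<lambda>V. g (x # V)" 1 "conv (\<lambda>V. f (x # V)) g" h W] by simp
  also have "\<dots> = conv f (conv g h) (x # W)"
    using Cons.IH by (simp add: algebra_simps)
  finally show ?case .
qed

lemma conv_cong1: "(\<And>i. f (take i W) = f' (take i W)) \<Longrightarrow> conv f g W = conv f' g W"
proof (induction W arbitrary: f f')
  case Nil then show ?case using Nil[of 0] by simp
next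
  case (Cons x W)
  have "f [] = f' []" using Cons.prems[of 0] by simp
  moreover have "conv (\<lambda>V. f (x # V)) g W = conv (\<lambda>V. f' (x # V)) g W"
    by (rule Cons.IH) (use Cons.prems[of "Suc i" for i] in simp)
  ultimately show ?case by simp
qed

lemma conv_cong2: "(\<And>i. g (drop i W) = g' (drop i W)) \<Longrightarrow> conv f g W = conv f g' W"
proof (induction W arbitrary: f)
  case Nil then show ?case using Nil[of 0] by simp
next
  case (Cons x W)
  have "g (x # W) = g' (x # W)" using Cons.prems[of 0] by simp
  moreover have "conv (\<lambda>V. f (x # V)) g W = conv (\<lambda>V. f (x # V)) g' W"
    by (rule Cons.IH) (use Cons.prems[of "Suc i" for i] in simp)
  ultimately show ?case by simp
qed

lemma conv_nz: "conv f g W \<noteq> 0 \<Longrightarrow> \<exists>i. f (take i W) \<noteq> 0 \<and> g (drop i W) \<noteq> 0"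
proof (induction W arbitrary: f)
  case Nil then show ?case by (intro exI[of _ 0]) auto
next
  case (Cons x W)
  show ?case
  proof (cases "f [] * g (x # W) = 0")
    case True
    hence "conv (\<lambda>V. f (x # V)) g W \<noteq> 0" using Cons.prems by (metis add_0 conv.simps(2))
    from Cons.IH[OF this] obtain i where "f (x # take i W) \<noteq> 0 \<and> g (drop i W) \<noteq> 0" by blast
    thus ?thesis by (intro exI[of _ "Suc i"]) simp
  next
    case False
    thus ?thesis by (intro exI[of _ 0]) simp
  qed
qed

lemma conv_delta0: "conv (\<lambda>V. if V = [] then c else 0) f W = c * f W"
proof (cases W)
  case Nil then show ?thesis by simp
next
  case (Cons x W')
  have "(\<lambda>V. if x # V = [] then c else 0) = (\<lambda>V. 0)" by auto
  then show ?thesis using Cons by simp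
qed

lemma conv_deltaL: "conv (\<lambda>V. if V = [x] then 1 else 0) f W =
   (case W of [] \<Rightarrow> 0 | z # W' \<Rightarrow> if z = x then f W' else 0)"
proof (cases W)
  case Nil then show ?thesis by simp
next
  case (Cons z W')
  have "(\<lambda>V. if z # V = [x] then 1 else 0) = (\<lambda>V. if V = [] then (if z = x then 1 else 0) else 0)"
    by auto
  then show ?thesis using Cons by (simp add: conv_delta0)
qed

lemma conv_deltaR: "conv f (\<lambda>V. if V = [x] then 1 else 0) W =
   (if W \<noteq> [] \<and> last W = x then f (butlast W) else 0)"
proof (induction W arbitrary: f)
  case Nil then show ?case by simp
next
  case (Cons z W)
  then show ?case by (cases W) auto
qed

definition mul :: "('a list \<Rightarrow> int) \<Rightarrow> ('a list \<Rightarrow> int) \<Rightarrow> 'a list \<Rightarrow> int" where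
  "mul f g W = (if distinct W then conv f g W else 0)"

lemma mul_assoc: "mul (mul f g) h W = mul f (mul g h) W"
proof (cases "distinct W")
  case True
  have "conv (mul f g) h W = conv (conv f g) h W"
    by (rule conv_cong1) (use True in \<open>simp add: mul_def\<close>)
  moreover have "conv f (mul g h) W = conv f (conv g h) W"
    by (rule conv_cong2) (use True in \<open>simp add: mul_def\<close>)
  ultimately show ?thesis using True by (simp add: mul_def conv_assoc)
qed (simp add: mul_def)

lemma mul_diff1: "mul (\<lambda>V. f V - f' V) g W = mul f g W - mul f' g W"
  by (simp add: mul_def conv_diff1)
lemma mul_diff2: "mul f (\<lambda>V. g V - g' V) W = mul f g W - mul f g' W"
  by (simp add: mul_def conv_diff2)
lemma mul_zero1[simp]: "mul (\<lambda>V. 0) g W = 0"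
  by (simp add: mul_def)
lemma mul_zero2[simp]: "mul f (\<lambda>V. 0) W = 0"
  by (simp add: mul_def)

definition comm :: "('a list \<Rightarrow> int) \<Rightarrow> ('a list \<Rightarrow> int) \<Rightarrow> 'a list \<Rightarrow> int" where
  "comm f g = (\<lambda>W. mul f g W - mul g f W)"

lemma comm_jacobi: "comm a (comm b c) W + comm b (comm c a) W + comm c (comm a b) W = 0"
  by (simp add: comm_def mul_diff1 mul_diff2 mul_assoc)

lemma comm_self: "comm a a = (\<lambda>W. 0)"
  by (simp add: comm_def)




fun phit :: "'a btree \<Rightarrow> 'a list \<Rightarrow> int" where
  "phit (Leaf x) = (\<lambda>W. if W = [x] then 1 else 0)"
| "phit (Br s t) = comm (phit s) (phit t)"

definition Phi :: "'a magring \<Rightarrow> 'a list \<Rightarrow> int" where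
  "Phi p = (\<lambda>W. \<Sum>t\<in>Poly_Mapping.keys p. Poly_Mapping.lookup p t * phit t W)"

lemma Phi_super: "finite B \<Longrightarrow> Poly_Mapping.keys p \<subseteq> B \<Longrightarrow>
   Phi p W = (\<Sum>t\<in>B. Poly_Mapping.lookup p t * phit t W)"
  unfolding Phi_def
  by (rule sum.mono_neutral_left) (auto simp: in_keys_iff)

lemma Phi_add: "Phi (p + q) W = Phi p W + Phi q W"
proof -
  let ?B = "Poly_Mapping.keys p \<union> Poly_Mapping.keys q"
  have "Phi (p + q) W = (\<Sum>t\<in>?B. Poly_Mapping.lookup (p + q) t * phit t W)"
    by (rule Phi_super) (auto dest: subsetD[OF keys_add])
  also have "\<dots> = (\<Sum>t\<in>?B. Poly_Mapping.lookup p t * phit t W)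
       + (\<Sum>t\<in>?B. Poly_Mapping.lookup q t * phit t W)"
    by (simp add: lookup_add distrib_right sum.distrib)
  also have "\<dots> = Phi p W + Phi q W"
    by (simp add: Phi_super[of ?B p W] Phi_super[of ?B q W])
  finally show ?thesis .
qed

lemma Phi_zero[simp]: "Phi 0 W = 0"
  by (simp add: Phi_def)

lemma Phi_neg: "Phi (- p) W = - Phi p W"
  using Phi_add[of p "-p" W] by simp

lemma Phi_diff: "Phi (p - q) W = Phi p W - Phi q W"
  using Phi_add[of p "-q" W] Phi_neg[of q W] by simp

lemma Phi_diff_fun: "Phi (p - q) = (\<lambda>W. Phi p W - Phi q W)"
  by (rule ext) (rule Phi_diff)

lemma Phi_T: "Phi (T t) = phit t"
  by (rule ext) (simp add: Phi_def)

lemma Phi_zero_fun: "Phi 0 = (\<lambda>W. 0)"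
  by (rule ext) simp

lemma comm_diff1: "comm (\<lambda>V. f V - f' V) g = (\<lambda>W. comm f g W - comm f' g W)"
  by (rule ext) (simp add: comm_def mul_diff1 mul_diff2)
lemma comm_diff2: "comm g (\<lambda>V. f V - f' V) = (\<lambda>W. comm g f W - comm g f' W)"
  by (rule ext) (simp add: comm_def mul_diff1 mul_diff2)

lemma Phi_br: "Phi (br p q) = comm (Phi p) (Phi q)"
proof -
  have "Phi (br p q) = comm (Phi p) (Phi q)" for q
    using subset_UNIV[of "Poly_Mapping.keys p"]
  proof (induction p rule: frag_induction)
    case zero then show ?case by (simp add: Phi_zero_fun comm_def)
  next
    case (one x)
    show ?case
      using subset_UNIV[of "Poly_Mapping.keys q"]
    proof (induction q rule: frag_induction)
      case zero then show ?case by (simp add: Phi_zero_fun comm_def)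
    next
      case (one y) then show ?case by (simp add: br_T Phi_T)
    next
      case (diff a b) then show ?case by (simp add: br_diff2 Phi_diff_fun comm_diff2)
    qed
  next
    case (diff a b) then show ?case by (simp add: br_diff1 Phi_diff_fun comm_diff1)
  qed
  thus ?thesis .
qed

lemma mul_supp:
  assumes "mul f g W \<noteq> 0"
    and A: "\<And>W. f W \<noteq> 0 \<Longrightarrow> mset W = Ma"
    and B: "\<And>W. g W \<noteq> 0 \<Longrightarrow> mset W = Mb"
  shows "mset W = Ma + Mb \<and> distinct W"
proof -
  have d: "distinct W" and c: "conv f g W \<noteq> 0"
    using assms(1) by (auto simp: mul_def split: if_splits)
  from conv_nz[OF c] obtain i where "f (take i W) \<noteq> 0" "g (drop i W) \<noteq> 0" by blast
  hence "mset (take i W) = Ma" "mset (drop i W) = Mb" using A B by blast+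
  hence "mset W = Ma + Mb" by (metis append_take_drop_id mset_append)
  thus ?thesis using d by simp
qed

lemma phit_supp: "phit t W \<noteq> 0 \<Longrightarrow> mset W = mset (leaves t) \<and> distinct W"
proof (induction t arbitrary: W)
  case (Leaf x) then show ?case by (auto split: if_splits)
next
  case (Br s t)
  have "mul (phit s) (phit t) W \<noteq> 0 \<or> mul (phit t) (phit s) W \<noteq> 0"
    using Br.prems by (auto simp: comm_def)
  then show ?case
  proof
    assume "mul (phit s) (phit t) W \<noteq> 0"
    from mul_supp[OF this, of "mset (leaves s)" "mset (leaves t)"] Br.IH show ?case by auto
  next
    assume "mul (phit t) (phit s) W \<noteq> 0"
    from mul_supp[OF this, of "mset (leaves t)" "mset (leaves s)"] Br.IH show ?case
      by (auto simp: add.commute)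
  qed
qed

lemma Phi_K: "k \<in> K \<Longrightarrow> Phi k = (\<lambda>W. 0)"
  unfolding RL_kernel_def
proof (induction rule: ideal_gen.induct)
  case (base x)
  then consider (a) u where "x = br u u"
    | (b) u v w where "x = br u (br v w) + br v (br w u) + br w (br u v)"
    | (c) ys where "x = rnorm ys" "2 \<le> length ys" "\<not> distinct ys"
    unfolding RL_rels_def by blast
  then show ?case
  proof cases
    case a then show ?thesis by (simp add: Phi_br comm_self)
  next
    case b
    show ?thesis
      by (rule ext) (simp add: b Phi_add Phi_br comm_jacobi)
  next
    case c
    have "ys \<noteq> []" using c by auto
    hence x: "x = T (rt ys)" using c by (simp add: rnorm_rt)
    show ?thesis
    proof (rule ext, rule ccontr)
      fix W assume "Phi x W \<noteq> 0"
      hence "phit (rt ys) W \<noteq> 0" by (simp add: x Phi_T)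
      from phit_supp[OF this] have "mset W = mset ys" "distinct W"
        using \<open>ys \<noteq> []\<close> by (auto simp: leaves_rt)
      thus False using c(3) by (metis mset_eq_imp_distinct_iff)
    qed
  qed
next
  case zero then show ?case by (simp add: Phi_zero_fun)
next
  case (add x z) then show ?case by (simp add: Phi_add fun_eq_iff)
next
  case (neg x) then show ?case by (simp add: Phi_neg fun_eq_iff)
next
  case (left x z) then show ?case by (simp add: Phi_br comm_def)
next
  case (right x z) then show ?case by (simp add: Phi_br comm_def)
qed

lemma coeff: "distinct L \<Longrightarrow> L \<noteq> [] \<Longrightarrow> W \<noteq> [] \<Longrightarrow> last W = last L \<Longrightarrow>
  phit (rt L) W = (if W = L then 1 else 0)"
proof (induction L arbitrary: W rule: rt.induct)
  case 1 then show ?case by simp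
next
  case (2 x) then show ?case by simp
next
  case (3 x y xs)
  let ?f = "phit (rt (y # xs))"
  have lx: "last W \<noteq> x" using 3 by (metis distinct.simps(2) last.simps last_in_set list.discI)
  have r: "mul ?f (phit (Leaf x)) W = 0"
    using lx by (simp add: mul_def conv_deltaR)
  have l: "mul (phit (Leaf x)) ?f W = (if W = x # y # xs then 1 else 0)"
  proof (cases W)
    case Nil then show ?thesis using 3 by simp
  next
    case (Cons z W')
    show ?thesis
    proof (cases "z = x")
      case True
      have "W' \<noteq> []" using lx Cons True by auto
      hence "?f W' = (if W' = y # xs then 1 else 0)"
        using 3 Cons by (intro "3.IH") auto
      then show ?thesis using Cons True 3 by (auto simp: mul_def conv_deltaL)
    next
      case False
      then show ?thesis using Cons by (auto simp: mul_def conv_deltaL)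
    qed
  qed
  show ?case using l r by (simp add: comm_def)
qed



definition zeta :: "'a set \<Rightarrow> 'a" where "zeta S = (SOME z. z \<in> S)"

definition Dset :: "'a set \<Rightarrow> 'a list set" where
  "Dset A = {W. set W \<subseteq> A \<and> distinct W \<and> W \<noteq> [] \<and> last W = zeta (set W)}"

lemma finite_Dset: "finite A \<Longrightarrow> finite (Dset A)"
  by (rule finite_subset[OF _ finite_subset_distinct[of A]]) (auto simp: Dset_def)

definition NN :: "'a set \<Rightarrow> 'a magring \<Rightarrow> 'a magring" where
  "NN A p = (\<Sum>W\<in>Dset A. Poly_Mapping.single (rt W) (Phi p W))"

lemma NN_add: "NN A (p + q) = NN A p + NN A q"
  by (simp add: NN_def Phi_add single_add sum.distrib)
lemma NN_neg: "NN A (- p) = - NN A p"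
  by (simp add: NN_def Phi_neg single_uminus sum_negf)
lemma NN_diff: "NN A (p - q) = NN A p - NN A q"
  using NN_add[of A p "-q"] NN_neg[of A q] by simp
lemma NN_K: "k \<in> K \<Longrightarrow> NN A k = 0"
  by (simp add: NN_def Phi_K)

definition PA :: "'a set \<Rightarrow> 'a list \<Rightarrow> bool" where
  "PA A L \<longleftrightarrow> L \<noteq> [] \<and> last L = zeta (set L) \<and> set L \<subseteq> A"

lemma NN_rnorm: assumes "finite A" "PA A L" "distinct L"
  shows "NN A (rnorm L) = rnorm L"
proof -
  have ne: "L \<noteq> []" using assms by (simp add: PA_def)
  have LD: "L \<in> Dset A" using assms by (auto simp: PA_def Dset_def)
  have ph: "Phi (rnorm L) = phit (rt L)" using ne by (simp add: rnorm_rt Phi_T)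
  have z: "phit (rt L) W = 0" if "W \<in> Dset A - {L}" for W
  proof (rule ccontr)
    assume nz: "phit (rt L) W \<noteq> 0"
    from phit_supp[OF nz] ne have m: "mset W = mset L" by (simp add: leaves_rt)
    hence "set W = set L" by (metis set_mset_mset)
    hence "last W = last L" using that assms(2) by (auto simp: Dset_def PA_def)
    hence "phit (rt L) W = (if W = L then 1 else 0)"
      using that ne assms(3) by (intro coeff) (auto simp: Dset_def)
    thus False using nz that by auto
  qed
  have "NN A (rnorm L) = Poly_Mapping.single (rt L) (phit (rt L) L)
      + (\<Sum>W\<in>Dset A - {L}. Poly_Mapping.single (rt W) (phit (rt L) W))"
    unfolding NN_def ph using LD finite_Dset[OF assms(1)] by (simp add: sum.remove)
  also have "\<dots> = Poly_Mapping.single (rt L) 1"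
    using z coeff[OF assms(3) ne ne refl] by simp
  finally show ?thesis using ne by (simp add: rnorm_rt)
qed

lemma G_NN: "p \<in> G (PA A) \<Longrightarrow> finite A \<Longrightarrow> p - NN A p \<in> K"
proof (induction rule: G.induct)
  case (gK k) then show ?case by (simp add: NN_K)
next
  case (gR L)
  show ?case
  proof (cases "distinct L")
    case True then show ?thesis using gR by (simp add: NN_rnorm K_zero)
  next
    case False
    hence "2 \<le> length L" by (cases L rule: rt.cases) auto
    hence "rnorm L \<in> RL_rels" using False unfolding RL_rels_def by blast
    hence "rnorm L \<in> K" by (rule K_rel)
    then show ?thesis by (simp add: NN_K)
  qed
next
  case (gA p q)
  have "p + q - NN A (p + q) = (p - NN A p) + (q - NN A q)" by (simp add: NN_add)
  then show ?case using gA K_add by metis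
next
  case (gN p)
  have "- p - NN A (- p) = - (p - NN A p)" by (simp add: NN_neg)
  then show ?case using gN K_neg by metis
qed

lemma tree_NN: assumes "finite A" "set (leaves t) \<subseteq> A" shows "T t - NN A (T t) \<in> K"
proof -
  let ?z = "zeta (set (leaves t))"
  have "?z \<in> set (leaves t)" unfolding zeta_def
    using leaves_ne[of t] by (metis some_in_eq set_empty)
  from spanning[OF this] have "T t \<in> G (Pz ?z (mset (leaves t)))" .
  hence "T t \<in> G (PA A)"
  proof (rule G_mono)
    fix L assume "Pz ?z (mset (leaves t)) L"
    hence "L \<noteq> []" "last L = ?z" "mset L = mset (leaves t)" by (auto simp: Pz_def)
    moreover have "set L = set (leaves t)" using calculation(3) by (metis set_mset_mset)
    ultimately show "PA A L" using assms(2) by (simp add: PA_def)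
  qed
  thus ?thesis using G_NN assms(1) by blast
qed

lemma all_NN: assumes "finite A" "Poly_Mapping.keys u \<subseteq> {t. set (leaves t) \<subseteq> A}"
  shows "u - NN A u \<in> K"
  using assms(2)
proof (induction u rule: frag_induction)
  case zero
  have "NN A 0 = 0" by (rule NN_K[OF K_zero])
  then show ?case by (simp add: K_zero)
next
  case (one x) then show ?case using tree_NN[OF assms(1)] by simp
next
  case (diff a b)
  have "a - b - NN A (a - b) = (a - NN A a) - (b - NN A b)" by (simp add: NN_diff)
  then show ?case using diff K_diff by metis
qed

abbreviation Iy where "Iy y \<equiv> ideal_gen (insert (gen y) K)"

lemma rnorm_Iy: "y \<in> set L \<Longrightarrow> rnorm L \<in> Iy y"
proof (induction L rule: rnorm.induct)
  case 1 then show ?case by simp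
next
  case (2 x) then show ?case by (simp add: ideal_gen.base)
next
  case (3 x z zs)
  have e: "rnorm (x # z # zs) = br (gen x) (rnorm (z # zs))" by simp
  show ?case
  proof (cases "y \<in> set (z # zs)")
    case True then show ?thesis using 3 e by (simp add: ideal_gen.left)
  next
    case False
    hence "x = y" using 3 by simp
    then show ?thesis using e by (simp add: ideal_gen.right ideal_gen.base)
  qed
qed

lemma single_ideal: "T t \<in> ideal_gen S \<Longrightarrow> Poly_Mapping.single t c \<in> ideal_gen S"
proof -
  assume a: "T t \<in> ideal_gen S"
  have n: "Poly_Mapping.single t (int n) \<in> ideal_gen S" for n
  proof (induction n)
    case 0 then show ?case by (simp add: ideal_gen.zero)
  next
    case (Suc n)
    have "Poly_Mapping.single t (int (Suc n)) = Poly_Mapping.single t (int n) + T t"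
      by (simp add: single_add[symmetric] add.commute)
    then show ?case using Suc a by (simp add: ideal_gen.add)
  qed
  show ?thesis
  proof (cases c rule: int_cases)
    case (nonneg n) then show ?thesis using n by simp
  next
    case (neg n)
    have "Poly_Mapping.single t c = - Poly_Mapping.single t (int (Suc n))"
      using neg by (simp add: single_uminus[symmetric])
    then show ?thesis using n[of "Suc n"] ideal_gen.neg by metis
  qed
qed

lemma ideal_sum: "(\<And>x. x \<in> X \<Longrightarrow> f x \<in> ideal_gen S) \<Longrightarrow> sum f X \<in> ideal_gen S"
proof (induction X rule: infinite_finite_induct)
  case (infinite A) then show ?case by (simp add: ideal_gen.zero)
next
  case empty then show ?case by (simp add: ideal_gen.zero)
next
  case (insert x F) then show ?case by (simp add: ideal_gen.add)
qed

lemma Phi_vanish: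
  assumes "br u (gen y) \<in> K" "W \<in> Dset A" "y \<notin> set W"
  shows "Phi u W = 0"
proof -
  have "Phi (br u (gen y)) (W @ [y]) = 0" using Phi_K[OF assms(1)] by simp
  hence c: "comm (Phi u) (phit (Leaf y)) (W @ [y]) = 0"
    by (simp add: Phi_br gen_def Phi_T)
  have d: "distinct (W @ [y])" using assms by (auto simp: Dset_def)
  have ne: "W \<noteq> []" using assms by (auto simp: Dset_def)
  then obtain w W' where W: "W = w # W'" by (cases W) auto
  have "w \<noteq> y" using assms(3) W by auto
  have "mul (phit (Leaf y)) (Phi u) (W @ [y]) = 0"
    using d W \<open>w \<noteq> y\<close> by (simp add: mul_def conv_deltaL)
  moreover have "mul (Phi u) (phit (Leaf y)) (W @ [y]) = Phi u W"
    using d by (simp add: mul_def conv_deltaR)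
  ultimately show ?thesis using c by (simp add: comm_def)
qed

lemma subset_dir: "RL_centralizer y \<subseteq> RL_lie_ideal_gen y"
proof
  fix u assume "u \<in> RL_centralizer y"
  hence cu: "br u (gen y) \<in> K" by (simp add: RL_centralizer_def)
  define A where "A = insert y (\<Union>t\<in>Poly_Mapping.keys u. set (leaves t))"
  have fA: "finite A" unfolding A_def by simp
  have "Poly_Mapping.keys u \<subseteq> {t. set (leaves t) \<subseteq> A}" unfolding A_def by auto
  from all_NN[OF fA this] have k: "u - NN A u \<in> K" .
  have "NN A u \<in> Iy y"
    unfolding NN_def
  proof (rule ideal_sum)
    fix W assume W: "W \<in> Dset A"
    show "Poly_Mapping.single (rt W) (Phi u W) \<in> Iy y"
    proof (cases "y \<in> set W")
      case True
      hence "W \<noteq> []" by auto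
      hence "T (rt W) \<in> Iy y" using rnorm_Iy[OF True] by (simp add: rnorm_rt)
      then show ?thesis by (rule single_ideal)
    next
      case False
      then show ?thesis using Phi_vanish[OF cu W False] by (simp add: ideal_gen.zero)
    qed
  qed
  moreover have "u - NN A u \<in> Iy y" using k by (simp add: ideal_gen.base)
  ultimately have "NN A u + (u - NN A u) \<in> Iy y" by (rule ideal_gen.add)
  thus "u \<in> RL_lie_ideal_gen y" by (simp add: RL_lie_ideal_gen_def)
qed

theorem lemma2p17:
  fixes y :: 'a
  shows "RL_centralizer y = RL_lie_ideal_gen y"
  using subset_dir supset_dir by (rule equalityI)


end
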